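(* Let $\mathbf{s}=(s_1,\ldots,s_l)\in\mathbb{Z}^l$ be admissible, $\theta\in\mathbb{R}$, and $c_{\mathbf{s}}:=(\theta^{|\mathbf{s}|}\eta_{\mathbf{s}})^\ast$. Define the $|\mathbf{s}|\times|\mathbf{s}|$ matrices $$N_0:=\mathrm{diag}\big(J_{s_1},J_{s_2},\ldots,J_{s_l}\big),\qquad N_1:=I^+_{|\mathbf{s}|}-N_0+\theta^{|\mathbf{s}|}e_{|\mathbf{s}|}e_1^T,$$ where $J_k\in\mathbb{R}^{k\times k}$ and $I^+_{|\mathbf{s}|}\in\mathbb{R}^{|\mathbf{s}|\times|\mathbf{s}|}$ denote the matrices that are zero except for ones on the first superdiagonal, and $e_i\in\mathbb{R}^{|\mathbf{s}|}$ is the $i$-th standard basis vector. Set $z_0:=e_1$ and $C:=e_1^T$. Then $(\mu,\gamma,\lambda)$ with $\mu(x_0)=N_0$, $\mu(x_1)=N_1$, $\gamma=z_0$, $\lambda=C$ is a linear representation of $c_{\mathbf{s}}$, i.e. for every word $\eta=x_{i_1}\cdots x_{i_k}\in X^\ast$, $$(c_{\mathbf{s}},\eta)=C\,N_{i_1}N_{i_2}\cdots N_{i_k}\,z_0 .$$ Consequently the bilinear system $(N_0,N_1,z_0,C)$, driven by the inputs $\bar u_0=1$, $\bar u_1=\mathrm{Li}_0$ with respect to the measure $d\tau/\tau$, realizes $\mathcal{L}_{\mathbf{s}}(t,\theta)=F_{c_{\mathbf{s}}}[\mathrm{Li}_0](t)$ for $t\in[0,1]$: the output is $y(t)=C z(t)=\mathcal{L}_{\mathbf{s}}(t,\theta)$,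 where $z(t):=\sum_{\eta=x_{i_1}\cdots x_{i_k}\in X^\ast}N_{i_1}\cdots N_{i_k}z_0\,E_\eta(t)$.
   Context: A vector $\mathbf{s}=(s_1,\ldots,s_l)\in\mathbb{Z}^l$ is admissible if $s_1\ge 2$ and $s_i\ge 1$ for $i\ge 2$; its weight is $|\mathbf{s}|=s_1+\cdots+s_l$. $\mathrm{Li}_{\mathbf{s}}(t)=\sum_{k_1>\cdots>k_l\ge 1}\frac{t^{k_1}}{k_1^{s_1}\cdots k_l^{s_l}}$, $\{\mathbf{s}\}^n$ is the $n$-fold concatenation of $\mathbf{s}$ with $\mathrm{Li}_{\{\mathbf{s}\}^0}:=1$, and $\mathcal{L}_{\mathbf{s}}(t,\theta):=\sum_{n\ge0}\mathrm{Li}_{\{\mathbf{s}\}^n}(t)\theta^{n|\mathbf{s}|}$. $X=\{x_0,x_1\}$, $X^\ast$ is the free monoid of words, series $c\in\mathbb{R}\langle\langle X\rangle\rangle$ are written $\sum_\eta (c,\eta)\eta$, and for a series $d$ with zero constant term $d^\ast=\sum_{i\ge0}d^i$. $\eta_{\mathbf{s}}:=x_0^{s_1-1}x_1\cdots x_0^{s_l-1}x_1$. A linear representation of $c$ is a triple $(\mu,\gamma,\lambda)$ with $\mu:X^\ast\to\mathbb{R}^{n\times n}$ a monoid morphism and $\gamma,\lambda^T\in\mathbb{R}^{n}$ such that $(c,\eta)=\lambda\mu(\eta)\gamma$ for all words $\eta$. Iterated integrals: $E_\emptyset=1$, $E_{x_i\xi}(t)=\int_0^t\bar u_i(\tau)E_\xi(\tau)\frac{d\tau}{\tau}$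 with $\bar u_0=1$, $\bar u_1(\tau)=\mathrm{Li}_0(\tau)=\tau/(1-\tau)$; $F_c[\mathrm{Li}_0](t)=\sum_\eta(c,\eta)E_\eta(t)$. *)

theory Defs
  imports "HOL-Analysis.Analysis" "Jordan_Normal_Form.Matrix"
begin

datatype letter = X0 | X1

type_synonym word = "letter list"
type_synonym series = "word \<Rightarrow> real"   (* (c, eta) = c eta *)

definition admissible :: "nat list \<Rightarrow> bool" where
  "admissible s \<longleftrightarrow> s \<noteq> [] \<and> hd s \<ge> 2 \<and> (\<forall>k\<in>set s. k \<ge> 1)"

definition weight :: "nat list \<Rightarrow> nat" where
  "weight s = sum_list s"

definition eta :: "nat list \<Rightarrow> word" where
  "eta s = concat (map (\<lambda>k. replicate (k - 1) X0 @ [X1]) s)"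

definition Li :: "nat list \<Rightarrow> real \<Rightarrow> real" where
  "Li s t = (if s = [] then 1 else
     infsum (\<lambda>ks. t ^ hd ks / prod_list (map2 (\<lambda>k e. real k ^ e) ks s))
       {ks. length ks = length s \<and> sorted_wrt (>) ks \<and> (\<forall>k\<in>set ks. k \<ge> 1)})"

definition rep :: "nat \<Rightarrow> nat list \<Rightarrow> nat list" where
  "rep n s = concat (replicate n s)"

definition Lcal :: "nat list \<Rightarrow> real \<Rightarrow> real \<Rightarrow> real" where
  "Lcal s t \<theta> = (\<Sum>n. Li (rep n s) t * \<theta> ^ (n * weight s))"

definition smono :: "real \<Rightarrow> word \<Rightarrow> series" where
  "smono a w = (\<lambda>v. if v = w then a else 0)"

definition smult :: "series \<Rightarrow> series \<Rightarrow> series" where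
  "smult c d = (\<lambda>w. \<Sum>i\<le>length w. c (take i w) * d (drop i w))"

primrec spow :: "series \<Rightarrow> nat \<Rightarrow> series" where
  "spow d 0 = smono 1 []"
| "spow d (Suc n) = smult d (spow d n)"

(* d^* = sum_{i>=0} d^i ; for d with zero constant term, d^i vanishes on words
   shorter than i, so the coefficient of w is the finite sum over i <= |w| *)
definition sstar :: "series \<Rightarrow> series" where
  "sstar d = (\<lambda>w. \<Sum>i\<le>length w. spow d i w)"

definition c_s :: "real \<Rightarrow> nat list \<Rightarrow> series" where
  "c_s \<theta> s = sstar (smono (\<theta> ^ weight s) (eta s))"

definition Jmat :: "nat \<Rightarrow> real mat" where
  "Jmat k = mat k k (\<lambda>(i, j). if j = i + 1 then 1 else 0)"

definition Iplus :: "nat \<Rightarrow> real mat" where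
  "Iplus n = mat n n (\<lambda>(i, j). if j = i + 1 then 1 else 0)"

fun blockdiag :: "real mat list \<Rightarrow> real mat" where
  "blockdiag [] = 0\<^sub>m 0 0"
| "blockdiag (A # As) = (let B = blockdiag As in
     four_block_mat A (0\<^sub>m (dim_row A) (dim_col B)) (0\<^sub>m (dim_row B) (dim_col A)) B)"

definition outer :: "real vec \<Rightarrow> real vec \<Rightarrow> real mat" where
  "outer v w = mat (dim_vec v) (dim_vec w) (\<lambda>(i, j). v $ i * w $ j)"

(* e_i (1-indexed) in R^n *)
definition e :: "nat \<Rightarrow> nat \<Rightarrow> real vec" where
  "e n i = unit_vec n (i - 1)"

definition N0 :: "nat list \<Rightarrow> real mat" where
  "N0 s = blockdiag (map Jmat s)"

definition N1 :: "real \<Rightarrow> nat list \<Rightarrow> real mat" where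
  "N1 \<theta> s = Iplus (weight s) - N0 s
      + (\<theta> ^ weight s) \<cdot>\<^sub>m outer (e (weight s) (weight s)) (e (weight s) 1)"

definition mu_word :: "nat \<Rightarrow> (letter \<Rightarrow> real mat) \<Rightarrow> word \<Rightarrow> real mat" where
  "mu_word n m w = foldr (\<lambda>x M. m x * M) w (1\<^sub>m n)"

definition linear_rep :: "series \<Rightarrow> nat \<Rightarrow> (letter \<Rightarrow> real mat) \<Rightarrow> real vec \<Rightarrow> real vec \<Rightarrow> bool" where
  "linear_rep c n m \<gamma> lam \<longleftrightarrow>
     (\<forall>x. m x \<in> carrier_mat n n) \<and> \<gamma> \<in> carrier_vec n \<and> lam \<in> carrier_vec n \<and>
     (\<forall>w. c w = scalar_prod lam (mu_word n m w *\<^sub>v \<gamma>))"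

definition Li0 :: "real \<Rightarrow> real" where
  "Li0 \<tau> = \<tau> / (1 - \<tau>)"

definition ubar :: "letter \<Rightarrow> real \<Rightarrow> real" where
  "ubar x \<tau> = (case x of X0 \<Rightarrow> 1 | X1 \<Rightarrow> Li0 \<tau>)"

primrec E :: "word \<Rightarrow> real \<Rightarrow> real" where
  "E [] t = 1"
| "E (x # w) t = integral {0..t} (\<lambda>\<tau>. ubar x \<tau> * E w \<tau> / \<tau>)"

(* F_c[Li0](t) = sum_eta (c, eta) E_eta(t), as an (unordered) sum over all words *)
definition Fc_has_value :: "series \<Rightarrow> real \<Rightarrow> real \<Rightarrow> bool" where
  "Fc_has_value c t y \<longleftrightarrow> ((\<lambda>w. c w * E w t) has_sum y) UNIV"

end

theory Submission
  imports Defs "HOL-Analysis.Harmonic_Numbers"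
begin

unbundle no vec_syntax

fun isst :: "nat list \<Rightarrow> nat \<Rightarrow> bool" where
  "isst [] j = True"
| "isst (q # r) j = (j = 0 \<or> (j \<ge> q \<and> isst r (j - q)))"

lemma isst_W: "isst s (sum_list s)"
  by (induction s) auto

lemma isst_0: "isst s 0"
  by (cases s) auto

lemma blockdiag_eq:
  "blockdiag (map Jmat s) = mat (sum_list s) (sum_list s)
     (\<lambda>(i,j). if j = Suc i \<and> \<not> isst s j then 1 else 0)"
proof (induction s)
  case Nil
  then show ?case by (auto simp: zero_mat_def)
next
  case (Cons q r)
  show ?case
    apply (simp only: list.map blockdiag.simps Let_def Cons.IH)
    apply (rule eq_matI)
    apply (auto simp: isst_0 Jmat_def Suc_diff_le)
    done
qed

lemma dim_eta: "\<forall>k\<in>set s. k \<ge> 1 \<Longrightarrow> length (eta s) = sum_list s"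
  by (induction s) (auto simp: eta_def)

lemma eta_Cons: "eta (q # r) = replicate (q - 1) X0 @ [X1] @ eta r"
  by (simp add: eta_def)

lemma nth_eta: "\<forall>k\<in>set s. k \<ge> 1 \<Longrightarrow> i < sum_list s \<Longrightarrow>
   eta s ! i = (if isst s (Suc i) then X1 else X0)"
proof (induction s arbitrary: i)
  case Nil
  then show ?case by simp
next
  case (Cons q r)
  have e1: "q \<ge> 1" using Cons.prems by auto
  show ?case
  proof (cases "i < q")
    case True
    then show ?thesis using e1
      by (auto simp: eta_Cons nth_append isst_0)
  next
    case False
    have L: "length (replicate (q - 1) X0 @ [X1]) = q" using e1 by simp
    have "eta (q # r) = (replicate (q - 1) X0 @ [X1]) @ eta r" by (simp add: eta_Cons)
    then have "eta (q # r) ! i = eta r ! (i - q)"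
      using False L by (simp only: nth_append) simp
    moreover have "isst (q # r) (Suc i) = isst r (Suc (i - q))"
      using False by (simp add: Suc_diff_le)
    ultimately show ?thesis using Cons False by auto
  qed
qed

definition pw :: "'a list \<Rightarrow> nat \<Rightarrow> 'a list" where
  "pw u n = concat (replicate n u)"

lemma smult_mono: "smult (smono a u) (smono b v) = smono (a * b) (u @ v)"
proof (rule ext)
  fix w :: word
  show "smult (smono a u) (smono b v) w = smono (a * b) (u @ v) w"
  proof (cases "w = u @ v")
    case True
    have "smult (smono a u) (smono b v) w =
      (\<Sum>i\<le>length w. if i = length u then a * b else 0)"
      unfolding smult_def smono_def
    proof (rule sum.cong)
      fix i assume i: "i \<in> {..length w}"
      show "(if take i w = u then a else 0) * (if drop i w = v then b else 0) =
            (if i = length u then a * b else 0)"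
      proof (cases "i = length u")
        case True
        then show ?thesis using \<open>w = u @ v\<close> by simp
      next
        case False
        have "take i w \<noteq> u"
        proof
          assume "take i w = u"
          then have "length u = min i (length w)" by auto
          then show False using i False by auto
        qed
        then show ?thesis using False by simp
      qed
    qed simp
    also have "\<dots> = a * b" using True by simp
    finally show ?thesis using True by (simp add: smono_def)
  next
    case False
    have "smult (smono a u) (smono b v) w = (\<Sum>i\<le>length w. 0)"
      unfolding smult_def smono_def
    proof (rule sum.cong)
      fix i assume i: "i \<in> {..length w}"
      have "\<not> (take i w = u \<and> drop i w = v)"
        using False append_take_drop_id[of i w] by auto
      then show "(if take i w = u then a else 0) * (if drop i w = v then b else 0) = 0"
        by auto
    qed simp
    then show ?thesis using False by (simp add: smono_def)
  qed
qed

lemma spow_mono: "spow (smono a u) n = smono (a ^ n) (pw u n)"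
  by (induction n) (auto simp: smult_mono pw_def)

lemma length_pw: "length (pw u n) = n * length u"
  by (induction n) (auto simp: pw_def)

lemma pw_Suc: "pw u (Suc n) = u @ pw u n"
  by (simp add: pw_def)

lemma pw_inj: "length u > 0 \<Longrightarrow> pw u n = pw u m \<Longrightarrow> n = m"
  by (metis length_pw mult_right_cancel neq0_conv)

lemma c_sum: "c_s \<theta> s w = (\<Sum>i\<le>length w. if w = pw (eta s) i then (\<theta> ^ weight s) ^ i else 0)"
  unfolding c_s_def sstar_def spow_mono by (rule sum.cong) (auto simp: smono_def)

lemma c_pw:
  assumes "length (eta s) > 0"
  shows "c_s \<theta> s (pw (eta s) n) = (\<theta> ^ weight s) ^ n"
proof -
  have "c_s \<theta> s (pw (eta s) n) =
    (\<Sum>i\<le>length (pw (eta s) n). if i = n then (\<theta> ^ weight s) ^ i else 0)"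
    unfolding c_sum using pw_inj[OF assms] by (intro sum.cong) auto
  also have "\<dots> = (\<theta> ^ weight s) ^ n"
  proof -
    have "n \<le> length (pw (eta s) n)" using assms by (simp add: length_pw Suc_le_eq)
    then show ?thesis by simp
  qed
  finally show ?thesis .
qed

lemma c_not: "(\<forall>n. w \<noteq> pw (eta s) n) \<Longrightarrow> c_s \<theta> s w = 0"
  unfolding c_sum by (intro sum.neutral) auto

lemma c_eta_app:
  assumes "length (eta s) > 0"
  shows "c_s \<theta> s (eta s @ w) = \<theta> ^ weight s * c_s \<theta> s w"
proof (cases "\<exists>n. w = pw (eta s) n")
  case True
  then obtain n where n: "w = pw (eta s) n" by blast
  then have "eta s @ w = pw (eta s) (Suc n)" by (simp add: pw_Suc)
  then show ?thesis using n c_pw[OF assms] by simp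
next
  case False
  have "\<forall>m. eta s @ w \<noteq> pw (eta s) m"
  proof
    fix m show "eta s @ w \<noteq> pw (eta s) m"
    proof (cases m)
      case 0 then show ?thesis using assms by (auto simp: pw_def)
    next
      case (Suc k)
      have "w \<noteq> pw (eta s) k" using False by blast
      then show ?thesis using Suc by (simp add: pw_Suc)
    qed
  qed
  then have "c_s \<theta> s (eta s @ w) = 0" by (rule c_not)
  moreover have "c_s \<theta> s w = 0" using False by (intro c_not) blast
  ultimately show ?thesis by simp
qed

lemma c_take_bad:
  assumes "i < length (eta s)" "x \<noteq> eta s ! i"
  shows "c_s \<theta> s (take i (eta s) @ x # w) = 0"
proof -
  have "\<forall>m. take i (eta s) @ x # w \<noteq> pw (eta s) m"
  proof
    fix m show "take i (eta s) @ x # w \<noteq> pw (eta s) m"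
    proof (cases m)
      case 0 then show ?thesis by (auto simp: pw_def)
    next
      case (Suc k)
      have "(take i (eta s) @ x # w) ! i = x" using assms by (simp add: nth_append)
      moreover have "pw (eta s) m ! i = eta s ! i" using assms Suc by (simp add: pw_Suc nth_append)
      ultimately show ?thesis using assms by auto
    qed
  qed
  then show ?thesis by (rule c_not)
qed

lemma c_take:
  assumes "i < length (eta s)"
  shows "c_s \<theta> s (take i (eta s)) = (if i = 0 then 1 else 0)"
proof (cases "i = 0")
  case True
  then show ?thesis using c_pw[of s \<theta> 0] assms by (simp add: pw_def)
next
  case False
  have "\<forall>m. take i (eta s) \<noteq> pw (eta s) m"
  proof
    fix m show "take i (eta s) \<noteq> pw (eta s) m"
    proof
      assume h: "take i (eta s) = pw (eta s) m"
      then have "length (take i (eta s)) = length (pw (eta s) m)" by simp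
      then have "i = m * length (eta s)" using assms by (simp add: length_pw)
      then show False using assms False by (cases m) auto
    qed
  qed
  then show ?thesis using c_not[of "take i (eta s)" s \<theta>] False by simp
qed

lemma N0_eq: "N0 s = mat (weight s) (weight s)
     (\<lambda>(i,j). if j = Suc i \<and> \<not> isst s j then 1 else 0)"
  unfolding N0_def weight_def by (rule blockdiag_eq)

lemma N1_eq: "N1 \<theta> s = mat (weight s) (weight s)
     (\<lambda>(i,j). (if j = Suc i \<and> isst s j then 1 else 0) + (if i = weight s - 1 \<and> j = 0 then \<theta> ^ weight s else 0))"
  unfolding N1_def N0_eq Iplus_def outer_def e_def
  by (rule eq_matI) auto

lemma mat_mult_vec_idx:
  assumes "i < n" "dim_vec v = n"
  shows "(mat n n f *\<^sub>v v) $ i = (\<Sum>j<n. f (i,j) * v $ j)"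
  using assms by (simp add: scalar_prod_def row_def lessThan_atLeast0)

lemma mu_Cons: "mu_word n m (x # w) = m x * mu_word n m w"
  by (simp add: mu_word_def)

lemma mu_carrier: assumes "\<And>x. m x \<in> carrier_mat n n" shows "mu_word n m w \<in> carrier_mat n n"
proof (induction w)
  case Nil then show ?case by (simp add: mu_word_def)
next
  case (Cons a w)
  have "m a * mu_word n m w \<in> carrier_mat n n" by (rule mult_carrier_mat[OF assms Cons])
  then show ?case by (simp add: mu_Cons)
qed

locale adm =
  fixes s :: "nat list" and \<theta> :: real
  assumes pos: "\<forall>k\<in>set s. k \<ge> 1" and nonempty: "s \<noteq> []"
begin

abbreviation W where "W \<equiv> weight s"
definition M :: "letter \<Rightarrow> real mat" where
  "M = (\<lambda>x. case x of X0 \<Rightarrow> N0 s | X1 \<Rightarrow> N1 \<theta> s)"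

lemma len_eta: "length (eta s) = W"
  using dim_eta[OF pos] by (simp add: weight_def)

lemma W_pos: "W > 0"
  using pos nonempty by (cases s) (auto simp: weight_def)

lemma M_carrier: "M x \<in> carrier_mat W W"
  by (cases x) (auto simp: M_def N0_eq N1_eq)

lemma muC: "mu_word W M w \<in> carrier_mat W W" by (rule mu_carrier[OF M_carrier])

lemma nth_eta': "i < W \<Longrightarrow> eta s ! i = (if isst s (Suc i) then X1 else X0)"
  using nth_eta[OF pos] by (simp add: weight_def)

lemma isstW: "isst s W" using isst_W by (simp add: weight_def)

lemma automaton:
  "\<forall>i<W. (mu_word W M w *\<^sub>v unit_vec W 0) $ i = c_s \<theta> s (take i (eta s) @ w)"
proof (induction w)
  case Nil
  show ?case
  proof (intro allI impI)
    fix i assume i: "i < W"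
    have "c_s \<theta> s (take i (eta s)) = (if i = 0 then 1 else 0)"
      using c_take[of i s \<theta>] i len_eta by simp
    then show "(mu_word W M [] *\<^sub>v unit_vec W 0) $ i = c_s \<theta> s (take i (eta s) @ [])"
      using i W_pos by (simp add: mu_word_def)
  qed
next
  case (Cons x w)
  define v where "v = mu_word W M w *\<^sub>v unit_vec W 0"
  have dv: "dim_vec v = W" unfolding v_def using muC[of w] by simp
  have eq: "mu_word W M (x # w) *\<^sub>v unit_vec W 0 = M x *\<^sub>v v"
    unfolding v_def mu_Cons
    by (rule assoc_mult_mat_vec[OF M_carrier muC]) simp
  have IH: "\<And>i. i < W \<Longrightarrow> v $ i = c_s \<theta> s (take i (eta s) @ w)"
    using Cons unfolding v_def by blast
  have lenpos: "length (eta s) > 0" using len_eta W_pos by simp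
  show ?case
  proof (intro allI impI)
    fix i assume i: "i < W"
    have tk: "Suc i < W \<Longrightarrow> take (Suc i) (eta s) @ w = take i (eta s) @ eta s ! i # w"
      using len_eta by (simp add: take_Suc_conv_app_nth)
    show "(mu_word W M (x # w) *\<^sub>v unit_vec W 0) $ i = c_s \<theta> s (take i (eta s) @ x # w)"
    proof (cases x)
      case X0
      have "(M x *\<^sub>v v) $ i = (\<Sum>j<W. (if j = Suc i \<and> \<not> isst s j then 1 else 0) * v $ j)"
        using i dv by (simp add: X0 M_def N0_eq mat_mult_vec_idx del: index_mult_mat_vec)
      also have "\<dots> = (\<Sum>j<W. if j = Suc i then (if \<not> isst s j then v $ j else 0) else 0)"
        by (rule sum.cong) auto
      also have "\<dots> = (if Suc i < W \<and> \<not> isst s (Suc i) then v $ Suc i else 0)"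
        by (simp add: sum.delta)
      also have "\<dots> = c_s \<theta> s (take i (eta s) @ x # w)"
      proof (cases "isst s (Suc i)")
        case True
        then have "x \<noteq> eta s ! i" using X0 nth_eta'[OF i] by simp
        then show ?thesis using c_take_bad[of i s x \<theta> w] i len_eta True by simp
      next
        case False
        then have si: "Suc i < W" using isstW i by (metis Suc_lessI)
        have "x = eta s ! i" using X0 nth_eta'[OF i] False by simp
        then show ?thesis using False si IH[OF si] tk[OF si] by simp
      qed
      finally show ?thesis using eq by simp
    next
      case X1
      have "(M x *\<^sub>v v) $ i = (\<Sum>j<W. ((if j = Suc i \<and> isst s j then 1 else 0) + (if i = W - 1 \<and> j = 0 then \<theta> ^ W else 0)) * v $ j)"
        using i dv by (simp add: X1 M_def N1_eq mat_mult_vec_idx del: index_mult_mat_vec)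
      also have "\<dots> = (\<Sum>j<W. if j = Suc i then (if isst s j then v $ j else 0) else 0)
          + (\<Sum>j<W. if j = 0 then (if i = W - 1 then \<theta> ^ W * v $ j else 0) else 0)"
        by (subst sum.distrib[symmetric], rule sum.cong) (auto simp: algebra_simps)
      also have "\<dots> = (if Suc i < W \<and> isst s (Suc i) then v $ Suc i else 0)
           + (if i = W - 1 then \<theta> ^ W * v $ 0 else 0)"
        using W_pos by (simp add: sum.delta)
      also have "\<dots> = c_s \<theta> s (take i (eta s) @ x # w)"
      proof (cases "isst s (Suc i)")
        case False
        then have "x \<noteq> eta s ! i" using X1 nth_eta'[OF i] by simp
        moreover have "i \<noteq> W - 1" using False isstW i W_pos by auto
        ultimately show ?thesis using c_take_bad[of i s x \<theta> w] i len_eta False by simp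
      next
        case True
        have xe: "x = eta s ! i" using X1 nth_eta'[OF i] True by simp
        show ?thesis
        proof (cases "Suc i < W")
          case True
          then show ?thesis using \<open>isst s (Suc i)\<close> IH[OF True] tk[OF True] xe by simp
        next
          case False
          then have iW: "i = W - 1" using i by simp
          have H: "take i (eta s) @ x # w = eta s @ w"
          proof -
            have si: "Suc i = W" using iW W_pos by simp
            have "take (Suc i) (eta s) = take i (eta s) @ [eta s ! i]"
              by (rule take_Suc_conv_app_nth) (use i len_eta in simp)
            moreover have "take (Suc i) (eta s) = eta s" using si len_eta by simp
            ultimately show ?thesis using xe by (metis append.assoc append_Cons append_Nil)
          qed
          have "c_s \<theta> s (take i (eta s) @ x # w) = \<theta> ^ W * c_s \<theta> s w"
            unfolding H by (rule c_eta_app[OF lenpos])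
          moreover have "v $ 0 = c_s \<theta> s w" using IH[of 0] W_pos by simp
          ultimately show ?thesis using False iW by simp
        qed
      qed
      finally show ?thesis using eq by simp
    qed
  qed
qed

end

context adm begin

lemma linrep: "linear_rep (c_s \<theta> s) W M (e W 1) (e W 1)"
  unfolding linear_rep_def
proof (intro conjI allI)
  fix x show "M x \<in> carrier_mat W W" by (rule M_carrier)
next
  show "e W 1 \<in> carrier_vec W" by (simp add: e_def)
  then show "e W 1 \<in> carrier_vec W" .
next
  fix w
  have "dim_row (mu_word W M w) = W" using muC[of w] by (rule carrier_matD)
  then have cv: "mu_word W M w *\<^sub>v unit_vec W 0 \<in> carrier_vec W" by (intro carrier_vecI) simp
  have e1: "e W 1 = unit_vec W 0" by (simp add: e_def)
  have "scalar_prod (unit_vec W 0) (mu_word W M w *\<^sub>v unit_vec W 0) = (mu_word W M w *\<^sub>v unit_vec W 0) $ 0"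
    by (rule scalar_prod_left_unit[OF cv W_pos])
  also have "\<dots> = c_s \<theta> s (take 0 (eta s) @ w)" using automaton W_pos by blast
  finally show "c_s \<theta> s w = scalar_prod (e W 1) (mu_word W M w *\<^sub>v e W 1)" unfolding e1 by simp
qed

end

fun co :: "word \<Rightarrow> nat \<Rightarrow> real" where
  "co [] k = (if k = 0 then 1 else 0)"
| "co (X0 # w) k = (if k = 0 then 0 else co w k / real k)"
| "co (X1 # w) k = (if k = 0 then 0 else (\<Sum>j<k. co w j) / real k)"

definition Lw :: "word \<Rightarrow> real \<Rightarrow> real" where
  "Lw w t = (\<Sum>k. co w k * t ^ k)"

lemma co_bounds: "0 \<le> co w k \<and> co w k \<le> 1"
proof (induction w arbitrary: k)
  case Nil then show ?case by simp
next
  case (Cons x w)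
  show ?case
  proof (cases x)
    case X0
    then show ?thesis using Cons[of k]
      by (auto simp: divide_le_eq intro: order_trans[of _ 1])
  next
    case X1
    have "(\<Sum>j<k. co w j) \<le> (\<Sum>j<k. 1)" by (rule sum_mono) (use Cons in auto)
    moreover have "0 \<le> (\<Sum>j<k. co w j)" by (rule sum_nonneg) (use Cons in auto)
    ultimately show ?thesis using X1 by (auto simp: divide_le_eq)
  qed
qed

lemma co_nonneg: "0 \<le> co w k" using co_bounds by blast
lemma co_le1: "co w k \<le> 1" using co_bounds by blast

lemma co_0: "w \<noteq> [] \<Longrightarrow> co w 0 = 0"
  by (cases w; cases "hd w") auto

lemma summable_co_pow: "\<bar>t\<bar> < 1 \<Longrightarrow> summable (\<lambda>k. co w k * t ^ k)"
proof (rule summable_comparison_test[of _ "\<lambda>k. \<bar>t\<bar> ^ k"])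
  assume t: "\<bar>t\<bar> < 1"
  show "\<exists>N. \<forall>n\<ge>N. norm (co w n * t ^ n) \<le> \<bar>t\<bar> ^ n"
    using co_bounds by (auto simp: abs_mult power_abs intro!: mult_left_le_one_le)
  show "summable (\<lambda>k. \<bar>t\<bar> ^ k)" using t by simp
qed

lemma Lw_deriv_general:
  assumes "\<bar>x\<bar> < 1"
  shows "DERIV (Lw w) x :> (\<Sum>n. diffs (co w) n * x ^ n)"
proof -
  have "summable (\<lambda>n. co w n * ((1 + \<bar>x\<bar>) / 2) ^ n)"
    by (rule summable_co_pow) (use assms in simp)
  from termdiffs_strong[OF this, of x] show ?thesis
    using assms unfolding Lw_def by (simp add: abs_if)
qed

lemma Lw_isCont: "\<bar>x\<bar> < 1 \<Longrightarrow> isCont (Lw w) x"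
  using Lw_deriv_general DERIV_isCont by blast

lemma Lw_0: "w \<noteq> [] \<Longrightarrow> Lw w 0 = 0"
  unfolding Lw_def using co_0 by simp

lemma Lw_Nil: "Lw [] t = 1"
proof -
  have "(\<lambda>k. co [] k * t ^ k) = (\<lambda>k. if k = 0 then 1 else 0)" by auto
  moreover have "(\<lambda>k::nat. if k = 0 then 1 else (0::real)) sums 1"
    using sums_single[of 0 "\<lambda>_. 1::real"] by simp
  ultimately show ?thesis unfolding Lw_def by (simp add: sums_iff)
qed

lemma deriv_X0:
  assumes "w \<noteq> []" "0 < x" "x < 1"
  shows "DERIV (Lw (X0 # w)) x :> Lw w x / x"
proof -
  have d: "diffs (co (X0 # w)) n = co w (Suc n)" for n
    unfolding diffs_def by simp
  have "summable (\<lambda>n. co w n * x ^ n)" by (rule summable_co_pow) (use assms in simp)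
  then have "Lw w x = co w 0 + (\<Sum>n. co w (Suc n) * x ^ n) * x"
    unfolding Lw_def by (rule powser_split_head(1))
  then have "(\<Sum>n. co w (Suc n) * x ^ n) = Lw w x / x" using assms co_0 by simp
  then show ?thesis using Lw_deriv_general[of x "X0 # w"] assms d by simp
qed

lemma deriv_X1:
  assumes "0 < x" "x < 1"
  shows "DERIV (Lw (X1 # w)) x :> Lw w x / (1 - x)"
proof -
  have d: "diffs (co (X1 # w)) n = (\<Sum>i\<le>n. co w i * x ^ i * x ^ (n - i)) / x ^ n" for n
  proof -
    have "diffs (co (X1 # w)) n = (\<Sum>j<Suc n. co w j)" unfolding diffs_def by simp
    also have "\<dots> = (\<Sum>i\<le>n. co w i)" by (simp add: lessThan_Suc_atMost)
    also have "\<dots> = (\<Sum>i\<le>n. co w i * x ^ i * x ^ (n - i)) / x ^ n"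
      using assms by (simp add: sum_divide_distrib mult.assoc power_add[symmetric])
    finally show ?thesis .
  qed
  have s1: "summable (\<lambda>k. norm (co w k * x ^ k))"
    using summable_co_pow[of x w] assms co_nonneg
    by (simp add: abs_mult)
  have s2: "summable (\<lambda>k. norm (x ^ k))" using assms by simp
  have "Lw w x / (1 - x) = (\<Sum>k. co w k * x ^ k) * (\<Sum>k. x ^ k)"
    unfolding Lw_def using assms by (simp add: suminf_geometric divide_inverse)
  also have "\<dots> = (\<Sum>k. \<Sum>i\<le>k. co w i * x ^ i * x ^ (k - i))"
    by (rule Cauchy_product[OF s1 s2])
  also have "\<dots> = (\<Sum>n. diffs (co (X1 # w)) n * x ^ n)"
    using assms by (simp add: d)
  finally show ?thesis using Lw_deriv_general[of x "X1 # w"] assms by simp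
qed

lemma Lw_cont_01:
  assumes "summable (co w)"
  shows "continuous_on {0..1} (Lw w)"
proof -
  have ul: "uniform_limit {0..1} (\<lambda>n x. \<Sum>i<n. co w i * x ^ i) (\<lambda>x. suminf (\<lambda>i. co w i * x ^ i)) sequentially"
  proof (rule Weierstrass_m_test[OF _ assms])
    fix n and x :: real assume "x \<in> {0..1}"
    then show "norm (co w n * x ^ n) \<le> co w n"
      using co_nonneg by (auto simp: abs_mult intro!: mult_left_le power_le_one)
  qed
  have "continuous_on {0..1} (\<lambda>x. suminf (\<lambda>i. co w i * x ^ i))"
    by (rule uniform_limit_theorem[OF _ ul]) (auto intro!: always_eventually continuous_intros)
  then show ?thesis unfolding Lw_def .
qed

definition good :: "word \<Rightarrow> bool" where
  "good w \<longleftrightarrow> w = [] \<or> last w = X1"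

lemma E_step:
  assumes gd: "x = X0 \<Longrightarrow> w \<noteq> []"
    and IH: "\<And>\<tau>. 0 < \<tau> \<Longrightarrow> \<tau> < 1 \<Longrightarrow> E w \<tau> = Lw w \<tau>"
    and t: "0 \<le> t" "t \<le> 1" and tc: "t < 1 \<or> summable (co (x # w))"
  shows "E (x # w) t = Lw (x # w) t"
proof -
  have cont: "continuous_on {0..t} (Lw (x # w))"
  proof (cases "t < 1")
    case True
    then show ?thesis using t by (intro continuous_at_imp_continuous_on ballI Lw_isCont) auto
  next
    case False
    then have "summable (co (x # w))" "t = 1" using tc t by auto
    then show ?thesis using Lw_cont_01 by simp
  qed
  have der: "(Lw (x # w) has_vector_derivative (ubar x \<tau> * E w \<tau> / \<tau>)) (at \<tau>)"
    if "\<tau> \<in> {0<..<t}" for \<tau>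
  proof -
    have tau: "0 < \<tau>" "\<tau> < 1" using that t by auto
    have "DERIV (Lw (x # w)) \<tau> :> ubar x \<tau> * E w \<tau> / \<tau>"
    proof (cases x)
      case X0
      then show ?thesis using deriv_X0[OF gd[OF X0] tau] IH[OF tau] by (simp add: ubar_def)
    next
      case X1
      have "ubar x \<tau> * E w \<tau> / \<tau> = Lw w \<tau> / (1 - \<tau>)"
        using X1 IH[OF tau] tau by (simp add: ubar_def Li0_def)
      then show ?thesis using deriv_X1[OF tau] X1 by simp
    qed
    then show ?thesis by (simp add: has_real_derivative_iff_has_vector_derivative)
  qed
  have "((\<lambda>\<tau>. ubar x \<tau> * E w \<tau> / \<tau>) has_integral (Lw (x # w) t - Lw (x # w) 0)) {0..t}"
    by (rule fundamental_theorem_of_calculus_interior[OF t(1) cont der])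
  then have "integral {0..t} (\<lambda>\<tau>. ubar x \<tau> * E w \<tau> / \<tau>) = Lw (x # w) t"
    using Lw_0[of "x # w"] by (simp add: integral_unique)
  then show ?thesis by simp
qed

lemma good_Cons: "good (x # w) \<Longrightarrow> good w \<and> (x = X0 \<longrightarrow> w \<noteq> [])"
  unfolding good_def by (cases w) auto

lemma E_eq: "good w \<Longrightarrow> 0 \<le> t \<Longrightarrow> t < 1 \<Longrightarrow> E w t = Lw w t"
proof (induction w arbitrary: t)
  case Nil
  then show ?case by (simp add: Lw_Nil)
next
  case (Cons x w)
  from good_Cons[OF Cons.prems(1)] have g: "good w" "x = X0 \<Longrightarrow> w \<noteq> []" by auto
  show ?case
    by (rule E_step[OF g(2) Cons.IH[OF g(1)]]) (use Cons.prems in auto)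
qed

lemma E_eq1:
  assumes "good w" "w \<noteq> []" "summable (co w)"
  shows "E w 1 = Lw w 1"
proof -
  obtain x v where w: "w = x # v" using assms(2) by (cases w) auto
  from good_Cons[OF assms(1)[unfolded w]] have g: "good v" "x = X0 \<Longrightarrow> v \<noteq> []" by auto
  show ?thesis unfolding w
    by (rule E_step[OF g(2)]) (use E_eq[OF g(1)] assms(3) w in auto)
qed

lemma co_rep_X0: "w \<noteq> [] \<Longrightarrow> co (replicate m X0 @ w) k = (if k = 0 then 0 else co w k / real k ^ m)"
  by (induction m) (auto simp: co_0)

lemma co_eta_Cons:
  assumes "q \<ge> 1"
  shows "co (eta (q # u)) k = (if k = 0 then 0 else (\<Sum>j<k. co (eta u) j) / real k ^ q)"
proof -
  have "eta (q # u) = replicate (q - 1) X0 @ (X1 # eta u)" by (simp add: eta_Cons)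
  then have "co (eta (q # u)) k = (if k = 0 then 0 else co (X1 # eta u) k / real k ^ (q - 1))"
    by (simp add: co_rep_X0)
  moreover have "real k * real k ^ (q - 1) = real k ^ q"
    using assms by (metis Suc_diff_le diff_Suc_1 power_Suc)
  ultimately show ?thesis by (simp add: divide_divide_eq_left)
qed

definition Sx :: "nat list \<Rightarrow> nat list set" where
  "Sx u = {ks. length ks = length u \<and> sorted_wrt (>) ks \<and> (\<forall>k\<in>set ks. k \<ge> 1)}"
definition Tx :: "nat list \<Rightarrow> nat \<Rightarrow> nat list set" where
  "Tx u k = {ks \<in> Sx u. hd ks = k}"
definition gx :: "nat list \<Rightarrow> nat list \<Rightarrow> real" where
  "gx u ks = 1 / prod_list (map2 (\<lambda>k e. real k ^ e) ks u)"

lemma sorted_hd_ge: "sorted_wrt (>) (ks::nat list) \<Longrightarrow> x \<in> set ks \<Longrightarrow> x \<le> hd ks"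
  by (cases ks) (auto intro: less_imp_le)

lemma T_single: "Tx [q] k = (if k \<ge> 1 then {[k]} else {})"
proof -
  have "ks \<in> Tx [q] k \<longleftrightarrow> ks = [k] \<and> k \<ge> 1" for ks
    unfolding Tx_def Sx_def by (cases ks) auto
  then show ?thesis by auto
qed

lemma T_Cons:
  assumes "u \<noteq> []"
  shows "Tx (q # u) k = (if k \<ge> 1 then Cons k ` (\<Union>j<k. Tx u j) else {})"
proof (intro equalityI subsetI)
  fix ks assume ks: "ks \<in> Tx (q # u) k"
  then obtain ks' where ks': "ks = k # ks'" unfolding Tx_def Sx_def by (cases ks) auto
  have "ks' \<noteq> []" using ks ks' assms unfolding Tx_def Sx_def by auto
  then have "hd ks' \<in> set ks'" by simp
  then have "hd ks' < k" using ks ks' unfolding Tx_def Sx_def by auto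
  moreover have "k \<ge> 1" using ks ks' unfolding Tx_def Sx_def by auto
  moreover have "ks' \<in> Tx u (hd ks')" using ks ks' unfolding Tx_def Sx_def by auto
  ultimately show "ks \<in> (if k \<ge> 1 then Cons k ` (\<Union>j<k. Tx u j) else {})"
    using ks' by auto
next
  fix ks assume "ks \<in> (if k \<ge> 1 then Cons k ` (\<Union>j<k. Tx u j) else {})"
  then obtain j ks' where k1: "k \<ge> 1" and ks: "ks = k # ks'" and j: "j < k" and ks': "ks' \<in> Tx u j"
    by (auto split: if_splits)
  have "\<forall>x\<in>set ks'. x < k"
    using ks' j sorted_hd_ge[of ks'] unfolding Tx_def Sx_def by fastforce
  then show "ks \<in> Tx (q # u) k" using ks' ks k1 unfolding Tx_def Sx_def by auto
qed

lemma gx_Cons: "gx (q # u) (k # ks) = gx u ks / real k ^ q"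
  unfolding gx_def by simp

lemma T_sum:
  "u \<noteq> [] \<Longrightarrow> \<forall>q\<in>set u. q \<ge> 1 \<Longrightarrow> finite (Tx u k) \<and> sum (gx u) (Tx u k) = co (eta u) k"
proof (induction u arbitrary: k)
  case Nil then show ?case by simp
next
  case (Cons q u)
  have q: "q \<ge> 1" using Cons.prems by auto
  show ?case
  proof (cases "u = []")
    case True
    have s1: "(\<Sum>j<k. co [] j) = 1" if "k \<ge> 1" for k
    proof -
      have "(\<Sum>j<k. co [] j) = (\<Sum>j<k. if j = 0 then 1 else 0)" by (rule sum.cong) auto
      also have "\<dots> = 1" using that by (simp add: sum.delta)
      finally show ?thesis .
    qed
    have "co (eta [q]) k = (if k = 0 then 0 else (\<Sum>j<k. co [] j) / real k ^ q)"
      using co_eta_Cons[OF q, of "[]" k] by (simp add: eta_def)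
    then show ?thesis using True q s1[of k]
      by (auto simp: T_single gx_def)
  next
    case False
    have IH: "finite (Tx u j) \<and> sum (gx u) (Tx u j) = co (eta u) j" for j
      using Cons.IH[OF False] Cons.prems by auto
    show ?thesis
    proof (cases "k \<ge> 1")
      case False
      then show ?thesis using q by (simp add: T_Cons[OF \<open>u \<noteq> []\<close>] co_eta_Cons)
    next
      case True
      have fin: "finite (\<Union>j<k. Tx u j)" using IH by auto
      have disj: "\<forall>i\<in>{..<k}. \<forall>j\<in>{..<k}. i \<noteq> j \<longrightarrow> Tx u i \<inter> Tx u j = {}"
        unfolding Tx_def by auto
      have "sum (gx (q # u)) (Tx (q # u) k) = (\<Sum>ks\<in>(\<Union>j<k. Tx u j). gx (q # u) (k # ks))"
        using True by (simp add: T_Cons[OF \<open>u \<noteq> []\<close>] sum.reindex)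
      also have "\<dots> = (\<Sum>ks\<in>(\<Union>j<k. Tx u j). gx u ks) / real k ^ q"
        by (simp add: gx_Cons sum_divide_distrib)
      also have "(\<Sum>ks\<in>(\<Union>j<k. Tx u j). gx u ks) = (\<Sum>j<k. sum (gx u) (Tx u j))"
        by (rule sum.UNION_disjoint) (use IH disj in auto)
      also have "\<dots> = (\<Sum>j<k. co (eta u) j)" using IH by simp
      finally show ?thesis using True q fin
        by (simp add: T_Cons[OF \<open>u \<noteq> []\<close>] co_eta_Cons)
    qed
  qed
qed

lemma prod_list_nonneg': "(\<And>x. x \<in> set xs \<Longrightarrow> (0::real) \<le> x) \<Longrightarrow> 0 \<le> prod_list xs"
  by (induction xs) auto

lemma gx_nonneg: "0 \<le> gx u ks"
  unfolding gx_def
  by (intro divide_nonneg_nonneg prod_list_nonneg') (auto simp: set_zip)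

lemma Li_eq:
  assumes u: "u \<noteq> []" "\<forall>q\<in>set u. q \<ge> 1" and t: "0 \<le> t"
    and sm: "summable (\<lambda>k. co (eta u) k * t ^ k)"
  shows "Li u t = Lw (eta u) t"
proof -
  define f where "f ks = t ^ hd ks * gx u ks" for ks
  define G where "G k = co (eta u) k * t ^ k" for k
  define f' where "f' = (\<lambda>(k::nat, ks). f ks)"
  have fnn: "0 \<le> f ks" for ks unfolding f_def using t gx_nonneg by simp
  have hT: "((\<lambda>ks. f' (k, ks)) has_sum G k) (Tx u k)" for k
  proof (rule has_sum_finiteI)
    show "finite (Tx u k)" using T_sum[OF u] by blast
    have "sum (\<lambda>ks. f' (k, ks)) (Tx u k) = (\<Sum>ks\<in>Tx u k. t ^ k * gx u ks)"
      unfolding f'_def f_def by (rule sum.cong) (auto simp: Tx_def)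
    also have "\<dots> = t ^ k * sum (gx u) (Tx u k)" by (simp add: sum_distrib_left)
    also have "\<dots> = G k" using T_sum[OF u] by (simp add: G_def)
    finally show "G k = sum (\<lambda>ks. f' (k, ks)) (Tx u k)" by simp
  qed
  have hG: "(G has_sum Lw (eta u) t) UNIV"
    unfolding G_def Lw_def
    by (rule sums_nonneg_imp_has_sum) (use sm co_nonneg t in \<open>auto intro: summable_sums\<close>)
  have smS: "f' summable_on Sigma UNIV (Tx u)"
    by (rule summable_on_SigmaI[OF hT]) (use hG fnn in \<open>auto simp: f'_def intro: has_sum_imp_summable\<close>)
  have hS: "(f' has_sum Lw (eta u) t) (Sigma UNIV (Tx u))"
    by (rule has_sum_SigmaI[OF hT hG smS])
  have bij: "bij_betw (\<lambda>ks. (hd ks, ks)) (Sx u) (Sigma UNIV (Tx u))"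
    unfolding bij_betw_def inj_on_def Tx_def by auto
  have "((\<lambda>ks. f' (hd ks, ks)) has_sum Lw (eta u) t) (Sx u)"
    using has_sum_reindex_bij_betw[OF bij] hS by blast
  then have "(f has_sum Lw (eta u) t) (Sx u)" unfolding f'_def by simp
  then have "infsum f (Sx u) = Lw (eta u) t" by (rule infsumI)
  moreover have "f = (\<lambda>ks. t ^ hd ks / prod_list (map2 (\<lambda>k e. real k ^ e) ks u))"
    unfolding f_def gx_def by (auto simp: fun_eq_iff)
  ultimately show ?thesis using u unfolding Li_def Sx_def by simp
qed

definition Pk :: "word \<Rightarrow> nat \<Rightarrow> real" where
  "Pk w k = (\<Sum>j<k. co w j)"

definition Hk :: "nat \<Rightarrow> real" where
  "Hk k = (\<Sum>j<k. if j = 0 then 0 else 1 / real j)"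

lemma Pk_nonneg: "0 \<le> Pk w k"
  unfolding Pk_def by (rule sum_nonneg) (simp add: co_nonneg)

lemma Pk_mono: "k \<le> k' \<Longrightarrow> Pk w k \<le> Pk w k'"
  unfolding Pk_def by (rule sum_mono2) (auto simp: co_nonneg)

lemma Hk_nonneg: "0 \<le> Hk k"
  unfolding Hk_def by (rule sum_nonneg) auto

lemma co_X0X1: "co (replicate m X0 @ X1 # v) j = (if j = 0 then 0 else Pk v j / real j ^ Suc m)"
  by (simp add: co_rep_X0 Pk_def)

lemma eta_Cons': "q \<ge> 1 \<Longrightarrow> eta (q # u) @ w = replicate (q - 1) X0 @ X1 # (eta u @ w)"
  by (simp add: eta_Cons)

lemma P_eta_app: "\<forall>q\<in>set u. q \<ge> 1 \<Longrightarrow> Pk (eta u @ w) k \<le> Hk k ^ length u * Pk w k"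
proof (induction u)
  case Nil then show ?case by (simp add: eta_def)
next
  case (Cons q u)
  have q: "q \<ge> 1" using Cons.prems by auto
  define v where "v = eta u @ w"
  have IH: "Pk v k \<le> Hk k ^ length u * Pk w k" using Cons v_def by auto
  have "Pk (eta (q # u) @ w) k = (\<Sum>j<k. if j = 0 then 0 else Pk v j / real j ^ q)"
  proof -
    have sq: "Suc (q - 1) = q" using q by simp
    show ?thesis unfolding Pk_def[of "eta (q # u) @ w"] using q
      by (simp only: eta_Cons'[OF q] v_def[symmetric]) (rule sum.cong, simp, simp only: co_X0X1 sq)
  qed
  also have "\<dots> \<le> (\<Sum>j<k. (if j = 0 then 0 else 1 / real j) * Pk v k)"
  proof (rule sum_mono)
    fix j assume j: "j \<in> {..<k}"
    show "(if j = 0 then 0 else Pk v j / real j ^ q) \<le> (if j = 0 then 0 else 1 / real j) * Pk v k"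
    proof (cases "j = 0")
      case False
      have "Pk v j \<le> Pk v k" using j by (intro Pk_mono) auto
      moreover have "real j \<le> real j ^ q" using False q by (simp add: self_le_power)
      ultimately have "Pk v j / real j ^ q \<le> Pk v k / real j"
        using False Pk_nonneg[of v j] by (intro frac_le) auto
      then show ?thesis using False by simp
    qed simp
  qed
  also have "\<dots> = Hk k * Pk v k" unfolding Hk_def by (simp add: sum_distrib_right)
  also have "\<dots> \<le> Hk k * (Hk k ^ length u * Pk w k)"
    by (rule mult_left_mono[OF IH Hk_nonneg])
  finally show ?case by simp
qed

lemma bernoulli_ineq:
  fixes x y :: real
  assumes "0 \<le> x" "0 \<le> y"
  shows "x ^ Suc n + real (Suc n) * x ^ n * y \<le> (x + y) ^ Suc n"
proof (induction n)
  case 0 then show ?case by simp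
next
  case (Suc n)
  have "x ^ Suc (Suc n) + real (Suc (Suc n)) * x ^ Suc n * y
      \<le> x * (x ^ Suc n + real (Suc n) * x ^ n * y) + y * (x ^ Suc n)"
    using assms by (simp add: algebra_simps)
  also have "\<dots> \<le> x * (x + y) ^ Suc n + y * (x + y) ^ Suc n"
    using Suc assms by (intro add_mono mult_left_mono power_mono) auto
  also have "\<dots> = (x + y) ^ Suc (Suc n)" by (simp add: algebra_simps)
  finally show ?case .
qed

lemma sum_F_bound:
  fixes f :: "nat \<Rightarrow> real"
  assumes "\<And>j. 0 \<le> f j"
  shows "(\<Sum>j<k. f j * (\<Sum>i<j. f i) ^ n) \<le> (\<Sum>i<k. f i) ^ Suc n / real (Suc n)"
proof (induction k)
  case 0 then show ?case by simp
next
  case (Suc k)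
  define x where "x = (\<Sum>i<k. f i)"
  have x0: "0 \<le> x" unfolding x_def by (rule sum_nonneg) (use assms in auto)
  have "(\<Sum>j<Suc k. f j * (\<Sum>i<j. f i) ^ n) \<le> x ^ Suc n / real (Suc n) + f k * x ^ n"
    using Suc by (simp add: x_def)
  also have "\<dots> = (x ^ Suc n + real (Suc n) * x ^ n * f k) / real (Suc n)"
    by (simp add: field_simps)
  also have "\<dots> \<le> (x + f k) ^ Suc n / real (Suc n)"
    using bernoulli_ineq[OF x0 assms[of k], of n] by (intro divide_right_mono) auto
  also have "\<dots> = (\<Sum>i<Suc k. f i) ^ Suc n / real (Suc n)" by (simp add: x_def)
  finally show ?case .
qed

lemma Hk_Suc_harm: "Hk (Suc p) = harm p"
  unfolding Hk_def harm_altdef sum.lessThan_Suc_shift by (simp add: inverse_eq_divide)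

lemma harm_le_ln: "harm p \<le> 1 + ln (real p)"
proof (cases p)
  case 0 then show ?thesis by (simp add: harm_altdef)
next
  case (Suc p')
  have "(\<lambda>n. harm (Suc n) - ln (real (Suc n))) p' \<le> (\<lambda>n. harm (Suc n) - ln (real (Suc n))) 0"
    using monotone_onD[OF decseq_harm_diff_ln, of 0 p'] by simp
  then have "harm (Suc p') - ln (real (Suc p')) \<le> 1" by (simp add: harm_altdef)
  then show ?thesis using Suc by simp
qed

lemma Hk_le_ln: "k \<ge> 1 \<Longrightarrow> Hk k \<le> 1 + ln (real k)"
proof -
  assume "k \<ge> 1"
  then obtain p where k: "k = Suc p" by (cases k) auto
  have "harm p \<le> 1 + ln (real p)" by (rule harm_le_ln)
  moreover have "ln (real p) \<le> ln (real (Suc p))" if "p > 0" using that by simp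
  moreover have "harm p \<le> 1 + ln (real (Suc p))" if "p = 0" using that by (simp add: harm_altdef)
  ultimately have "harm p \<le> 1 + ln (real (Suc p))"
    by (cases "p = 0") (simp, linarith)
  then show ?thesis unfolding k Hk_Suc_harm .
qed

lemma ln_le_powr: "(x::real) \<ge> 1 \<Longrightarrow> \<epsilon> > 0 \<Longrightarrow> ln x \<le> x powr \<epsilon> / \<epsilon>"
proof -
  assume x: "x \<ge> 1" and e: "\<epsilon> > 0"
  have "ln (x powr \<epsilon>) \<le> x powr \<epsilon> - 1" using x by (intro ln_le_minus_one) auto
  then have "\<epsilon> * ln x \<le> x powr \<epsilon>" by (simp add: ln_powr)
  then show ?thesis using e by (simp add: field_simps)
qed

lemma Hk_pow_bound:
  fixes m :: nat
  defines "\<epsilon> \<equiv> 1 / (2 * (real m + 1))"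
  assumes k: "k \<ge> 1"
  shows "Hk k ^ m \<le> (1 + 1 / \<epsilon>) ^ m * real k powr (1/2)"
proof -
  have e: "\<epsilon> > 0" unfolding \<epsilon>_def by simp
  have x1: "real k \<ge> 1" using k by simp
  have kp1: "real k powr \<epsilon> \<ge> 1" using x1 e by (simp add: ge_one_powr_ge_zero)
  have "Hk k \<le> 1 + real k powr \<epsilon> / \<epsilon>" using Hk_le_ln[OF k] ln_le_powr[OF x1 e] by simp
  also have "\<dots> \<le> (1 + 1 / \<epsilon>) * real k powr \<epsilon>"
    using kp1 e by (simp add: field_simps)
  finally have H: "Hk k \<le> (1 + 1 / \<epsilon>) * real k powr \<epsilon>" .
  have "Hk k ^ m \<le> ((1 + 1 / \<epsilon>) * real k powr \<epsilon>) ^ m"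
    by (rule power_mono[OF H Hk_nonneg])
  also have "\<dots> = (1 + 1 / \<epsilon>) ^ m * real k powr (real m * \<epsilon>)"
    using x1 by (simp add: power_mult_distrib powr_power)
  also have "\<dots> \<le> (1 + 1 / \<epsilon>) ^ m * real k powr (1/2)"
  proof (rule mult_left_mono)
    have "real m * \<epsilon> \<le> 1/2" unfolding \<epsilon>_def by (simp add: field_simps)
    then show "real k powr (real m * \<epsilon>) \<le> real k powr (1/2)" using x1 by (rule powr_mono)
  qed (use e in simp)
  finally show ?thesis .
qed

definition fb :: "nat \<Rightarrow> nat \<Rightarrow> real" where
  "fb m k = (if k = 0 then 0 else Hk k ^ m / real k ^ 2)"

lemma fb_nonneg: "0 \<le> fb m k"
  unfolding fb_def using Hk_nonneg by simp

lemma fb_summable: "summable (fb m)"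
proof -
  define \<epsilon> :: real where "\<epsilon> = 1 / (2 * (real m + 1))"
  define C where "C = (1 + 1 / \<epsilon>) ^ m"
  have sp: "summable (\<lambda>k. real k powr (-3/2))" by (simp add: summable_real_powr_iff)
  show ?thesis
  proof (rule summable_comparison_test[OF _ summable_mult[OF sp, of C]])
    show "\<exists>N. \<forall>n\<ge>N. norm (fb m n) \<le> C * real n powr (-3/2)"
    proof (intro exI allI impI)
      fix n :: nat assume "n \<ge> 1"
      then have n: "n \<ge> 1" "real n > 0" by auto
      have "Hk n ^ m \<le> C * real n powr (1/2)"
        using Hk_pow_bound[OF n(1), of m] unfolding C_def \<epsilon>_def by simp
      then have "Hk n ^ m / real n ^ 2 \<le> C * real n powr (1/2) / real n ^ 2"
        using n by (intro divide_right_mono) auto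
      also have "real n ^ 2 = real n powr 2" using n powr_realpow[of "real n" 2] by simp
      also have "C * real n powr (1/2) / real n powr 2 = C * real n powr (-3/2)"
      proof -
        have "real n powr (1/2) / real n powr 2 = real n powr (1/2 - 2)" by (rule powr_diff[symmetric])
        then show ?thesis by (simp add: times_divide_eq_right[symmetric])
      qed
      finally show "norm (fb m n) \<le> C * real n powr (-3/2)"
        using n fb_nonneg[of m n] by (simp add: fb_def)
    qed
  qed
qed

locale adm2 =
  fixes s :: "nat list" and \<theta> :: real
  assumes adm: "admissible s"
begin

abbreviation m where "m \<equiv> length s - 1"
abbreviation pws where "pws \<equiv> pw (eta s)"

lemma s_pos: "\<forall>k\<in>set s. k \<ge> 1" using adm unfolding admissible_def by auto
lemma s_ne: "s \<noteq> []" using adm unfolding admissible_def by auto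

lemma co_pw_Suc_le: "co (pws (Suc n)) k \<le> fb m k * Pk (pws n) k"
proof -
  obtain q u where s: "s = q # u" using s_ne by (cases s) auto
  have q: "q \<ge> 2" using adm s unfolding admissible_def by auto
  have u: "\<forall>k\<in>set u. k \<ge> 1" using s_pos s by auto
  define v where "v = pws n"
  have sq: "Suc (q - 1) = q" using q by simp
  have "co (pws (Suc n)) k = co (replicate (q - 1) X0 @ X1 # (eta u @ v)) k"
    unfolding v_def pw_Suc s using q by (simp add: eta_Cons')
  also have "\<dots> = (if k = 0 then 0 else Pk (eta u @ v) k / real k ^ q)"
    by (simp only: co_X0X1 sq)
  also have "\<dots> \<le> fb m k * Pk v k"
  proof (cases "k = 0")
    case False
    have "Pk (eta u @ v) k \<le> Hk k ^ length u * Pk v k" by (rule P_eta_app[OF u])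
    moreover have "real k ^ 2 \<le> real k ^ q" using False q by (intro power_increasing) auto
    ultimately have "Pk (eta u @ v) k / real k ^ q \<le> Hk k ^ length u * Pk v k / real k ^ 2"
      using False Pk_nonneg[of "eta u @ v" k] by (intro frac_le) auto
    then show ?thesis using False s by (simp add: fb_def)
  qed (simp add: fb_def)
  finally show ?thesis unfolding v_def .
qed

lemma Pk_pw_bound: "Pk (pws n) k \<le> (\<Sum>j<k. fb m j) ^ n / fact n"
proof (induction n arbitrary: k)
  case 0
  have "Pk [] k = (\<Sum>j<k. if j = 0 then 1 else 0)" unfolding Pk_def by (rule sum.cong) auto
  also have "\<dots> \<le> 1" by (simp add: sum.delta)
  finally show ?case by (simp add: pw_def)
next
  case (Suc n)
  define F where "F k = (\<Sum>j<k. fb m j)" for k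
  have "Pk (pws (Suc n)) k \<le> (\<Sum>j<k. fb m j * Pk (pws n) j)"
    unfolding Pk_def[of "pws (Suc n)"] by (rule sum_mono) (rule co_pw_Suc_le)
  also have "\<dots> \<le> (\<Sum>j<k. fb m j * (F j ^ n / fact n))"
    by (rule sum_mono, rule mult_left_mono) (use Suc fb_nonneg in \<open>auto simp: F_def\<close>)
  also have "\<dots> = (\<Sum>j<k. fb m j * F j ^ n) / fact n"
    by (simp add: sum_divide_distrib)
  also have "\<dots> \<le> (F k ^ Suc n / real (Suc n)) / fact n"
    by (rule divide_right_mono) (use sum_F_bound[where f="fb m" and k=k and n=n] fb_nonneg in \<open>auto simp: F_def\<close>)
  also have "\<dots> = F k ^ Suc n / fact (Suc n)" by (simp add: field_simps)
  finally show ?case by (simp add: F_def)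
qed

definition B where "B = suminf (fb m)"

lemma F_le_B: "(\<Sum>j<k. fb m j) \<le> B"
  unfolding B_def by (rule sum_le_suminf[OF fb_summable]) (auto simp: fb_nonneg)

lemma Pk_pw_B: "Pk (pws n) k \<le> B ^ n / fact n"
proof -
  have "(\<Sum>j<k. fb m j) ^ n \<le> B ^ n"
    by (rule power_mono[OF F_le_B]) (simp add: sum_nonneg fb_nonneg)
  then show ?thesis using Pk_pw_bound[of n k] by (smt (verit) divide_right_mono fact_ge_zero)
qed

lemma co_pw_summable: "summable (co (pws n))"
  by (rule summableI_nonneg_bounded[of _ "B ^ n / fact n"]) (use co_nonneg Pk_pw_B in \<open>auto simp: Pk_def\<close>)

lemma co_pw_suminf: "suminf (co (pws n)) \<le> B ^ n / fact n"
  by (rule suminf_le_const[OF co_pw_summable]) (use Pk_pw_B in \<open>auto simp: Pk_def\<close>)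

end

lemma eta_append: "eta (xs @ ys) = eta xs @ eta ys"
  by (simp add: eta_def)

lemma eta_rep: "eta (rep n s) = pw (eta s) n"
  by (induction n) (auto simp: rep_def pw_def eta_append eta_def)

lemma good_eta: "good (eta u)"
proof (induction u)
  case Nil then show ?case by (simp add: good_def eta_def)
next
  case (Cons q u)
  then show ?case by (auto simp: good_def eta_Cons)
qed

lemma set_rep: "set (rep n s) \<subseteq> set s"
  by (auto simp: rep_def)

context adm2
begin

abbreviation W where "W \<equiv> weight s"

lemma eta_ne: "length (eta s) > 0"
  using dim_eta[OF s_pos] s_ne s_pos by (cases s) auto

lemma Lw_pw_bound:
  assumes t: "0 \<le> t" "t \<le> 1"
  shows "summable (\<lambda>k. co (pws n) k * t ^ k)" "0 \<le> Lw (pws n) t" "Lw (pws n) t \<le> B ^ n / fact n"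
proof -
  have le: "co (pws n) k * t ^ k \<le> co (pws n) k" for k
    using t co_nonneg[of "pws n" k] by (simp add: mult_left_le power_le_one)
  have nn: "0 \<le> co (pws n) k * t ^ k" for k using t co_nonneg by simp
  show sm: "summable (\<lambda>k. co (pws n) k * t ^ k)"
    by (rule summable_comparison_test[OF _ co_pw_summable]) (use le nn in auto)
  show "0 \<le> Lw (pws n) t" unfolding Lw_def by (rule suminf_nonneg[OF sm nn])
  have "Lw (pws n) t \<le> suminf (co (pws n))"
    unfolding Lw_def by (rule suminf_le[OF le sm co_pw_summable])
  then show "Lw (pws n) t \<le> B ^ n / fact n" using co_pw_suminf[of n] by linarith
qed

lemma term_eq:
  assumes t: "0 \<le> t" "t \<le> 1"
  shows "c_s \<theta> s (pws n) * E (pws n) t = Li (rep n s) t * \<theta> ^ (n * W)"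
    and "E (pws n) t = Lw (pws n) t" and "Li (rep n s) t = Lw (pws n) t"
proof -
  have c: "c_s \<theta> s (pws n) = \<theta> ^ (n * W)"
  proof -
    have "(\<theta> ^ W) ^ n = \<theta> ^ (n * W)" by (metis power_mult mult.commute)
    then show ?thesis using c_pw[OF eta_ne, of \<theta> n] by simp
  qed
  show LE: "Li (rep n s) t = Lw (pws n) t"
  proof (cases n)
    case 0 then show ?thesis by (simp add: Li_def rep_def pw_def Lw_Nil)
  next
    case (Suc n')
    have ne: "rep n s \<noteq> []" using Suc s_ne by (simp add: rep_def)
    have pos: "\<forall>q\<in>set (rep n s). q \<ge> 1" using set_rep s_pos by blast
    show ?thesis using Li_eq[OF ne pos t(1)] Lw_pw_bound[OF t, of n] by (simp add: eta_rep)
  qed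
  show EE: "E (pws n) t = Lw (pws n) t"
  proof (cases "t < 1")
    case True
    then show ?thesis using E_eq[of "pws n" t] good_eta[of "rep n s"] t by (simp add: eta_rep)
  next
    case False
    then have t1: "t = 1" using t by simp
    show ?thesis
    proof (cases n)
      case 0 then show ?thesis by (simp add: pw_def Lw_Nil)
    next
      case (Suc n')
      have "pws n \<noteq> []" using Suc eta_ne by (simp add: pw_Suc)
      then show ?thesis using E_eq1[of "pws n"] good_eta[of "rep n s"] co_pw_summable t1
        by (simp add: eta_rep)
    qed
  qed
  show "c_s \<theta> s (pws n) * E (pws n) t = Li (rep n s) t * \<theta> ^ (n * W)"
    using c LE EE by simp
qed

lemma Fc:
  assumes t: "0 \<le> t" "t \<le> 1"
  shows "Fc_has_value (c_s \<theta> s) t (Lcal s t \<theta>)"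
proof -
  define g where "g = (\<lambda>n. Li (rep n s) t * \<theta> ^ (n * W))"
  have bnd: "norm (g n) \<le> inverse (fact n) * (B * \<bar>\<theta>\<bar> ^ W) ^ n" for n
  proof -
    have "norm (g n) = Lw (pws n) t * \<bar>\<theta>\<bar> ^ (n * W)"
      unfolding g_def using term_eq(3)[OF t, of n] Lw_pw_bound(2)[OF t, of n]
      by (simp add: abs_mult power_abs)
    also have "\<dots> \<le> B ^ n / fact n * \<bar>\<theta>\<bar> ^ (n * W)"
      by (rule mult_right_mono) (use Lw_pw_bound(3)[OF t, of n] in auto)
    also have "\<dots> = inverse (fact n) * (B * \<bar>\<theta>\<bar> ^ W) ^ n"
    proof -
      have "\<bar>\<theta>\<bar> ^ (n * W) = (\<bar>\<theta>\<bar> ^ W) ^ n" by (metis power_mult mult.commute)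
      then show ?thesis by (simp add: power_mult_distrib divide_inverse)
    qed
    finally show ?thesis .
  qed
  have sn: "summable (\<lambda>n. norm (g n))"
    by (rule summable_comparison_test[OF _ summable_exp[of "B * \<bar>\<theta>\<bar> ^ W"]]) (use bnd in auto)
  have "(g has_sum Lcal s t \<theta>) UNIV"
    unfolding Lcal_def mult.commute[of _ "\<theta> ^ _"]
    unfolding mult.commute[of "\<theta> ^ _"] g_def[symmetric]
    by (rule norm_summable_imp_has_sum[OF sn]) (rule summable_sums[OF summable_norm_cancel[OF sn]])
  then have h1: "((\<lambda>w. c_s \<theta> s w * E w t) \<circ> pws has_sum Lcal s t \<theta>) UNIV"
    using term_eq(1)[OF t] by (simp add: g_def comp_def)
  have inj: "inj pws" using pw_inj[OF eta_ne] by (auto simp: inj_def)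
  have h2: "((\<lambda>w. c_s \<theta> s w * E w t) has_sum Lcal s t \<theta>) (range pws)"
    using has_sum_reindex[OF inj_on_subset[OF inj subset_UNIV]] h1 by blast
  have "((\<lambda>w. c_s \<theta> s w * E w t) has_sum Lcal s t \<theta>) UNIV"
  proof (subst has_sum_cong_neutral[where T = "range pws" and g = "\<lambda>w. c_s \<theta> s w * E w t"])
    fix w assume "w \<in> UNIV - range pws"
    then show "c_s \<theta> s w * E w t = 0" using c_not[of w s \<theta>] by auto
  qed (use h2 in auto)
  then show ?thesis unfolding Fc_has_value_def .
qed

end

theorem theorem1:
  fixes s :: "nat list" and \<theta> :: real
  assumes "admissible s"
  shows "linear_rep (c_s \<theta> s) (weight s)
           (\<lambda>x. case x of X0 \<Rightarrow> N0 s | X1 \<Rightarrow> N1 \<theta> s)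
           (e (weight s) 1) (e (weight s) 1)
       \<and> (\<forall>t\<in>{0..1}. Fc_has_value (c_s \<theta> s) t (Lcal s t \<theta>))"
proof
  interpret A: adm s \<theta> using assms by unfold_locales (auto simp: admissible_def)
  interpret B: adm2 s \<theta> using assms by unfold_locales
  show "linear_rep (c_s \<theta> s) (weight s)
           (\<lambda>x. case x of X0 \<Rightarrow> N0 s | X1 \<Rightarrow> N1 \<theta> s)
           (e (weight s) 1) (e (weight s) 1)"
    using A.linrep unfolding A.M_def .
  show "\<forall>t\<in>{0..1}. Fc_has_value (c_s \<theta> s) t (Lcal s t \<theta>)"
    using B.Fc by auto
qed

end
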